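(* Given $\vartheta\in\mathbf{I}$, let $\zeta(\cdot)$ be the unique fluid model solution with $\zeta(0)=\vartheta$. For every $T,\varepsilon>0$ there exists $\kappa>0$ such that $\max_{1\le k\le K}\sup_{t\in[0,T]}\sup_{x,y\in\mathbb{R}_+}\zeta_k(t)(C^{\kappa}_{(x,y)})<\varepsilon$.
   Context: Let $K\in\mathbb{N}$, $\lambda_k,\mu_k\in(0,\infty)$, $\rho_k=\lambda_k/\mu_k$, $\rho=\sum_k\rho_k>1$; $\Gamma_k$ a continuous probability distribution on $(0,\infty)$ with finite mean, $G_k(x)=1-\Gamma_k([0,x])$. A workload fluid model solution is $w:[0,\infty)\to\mathbb{R}_+$ with $w(t)=w(0)+\sum_k\rho_k\int_0^tG_k(w(s))ds-t$; for each $w_0\ge0$ there is a unique one with $w(0)=w_0$ (taken as known). $\mathbf{M}_2$: finite nonnegative Borel measures on $\mathbb{R}_+^2$; $\mathbf{M}_2^K$ its product. For $\vartheta\in\mathbf{M}_2^K$: $\vartheta_+=\sum_k\vartheta_k$, $w_\vartheta=\sup\{x\ge0:\vartheta_+([x,\infty)\times\mathbb{R}_+)>0\}$. For Borel $B\subset\mathbb{R}_+^2$, $x\in\mathbb{R}_+^2$: $B_x=\{y\in\mathbb{R}_+^2:y-x\in B\}$, $B_t=B_{(t,t)}$; the $\kappa$-enlargement is $B^\kappa=\{z\in\mathbb{R}_+^2:\inf_{y\in B}\|z-y\|<\kappa\}$, and $B_x^\kappa$ means $(B_x)^\kappa$. $C=\mathbb{R}_+\times\{0\}\cup\{0\}\times\mathbb{R}_+$.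 $\mathbf{I}$: the set of $\vartheta\in\mathbf{M}_2^K$ with $\vartheta_+(C_x)=0$ for all $x\in\mathbb{R}_+^2$, $w_\vartheta<\infty$, $\max_kG_k(w_\vartheta-\varepsilon)>0$ for all $\varepsilon>0$. $\delta^+_x$: unit mass at $x$ if $x>0$, zero if $x=0$. A fluid model solution with initial measure $\vartheta\in\mathbf{I}$ is $\zeta:[0,\infty)\to\mathbf{M}_2^K$ with $\zeta(0)=\vartheta$ and $\zeta_k(t)(B)=\zeta_k(0)(B_t)+\lambda_k\int_0^t(\delta^+_{w(s)}\times\Gamma_k)(B_{t-s})ds$ for all $k$, Borel $B$, $t\ge0$, $w$ the workload fluid model solution with $w(0)=w_\vartheta$ (such $\zeta$ exists uniquely). *)

theory Defs
  imports "HOL-Probability.Probability"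
begin

definition Rp2 :: "(real \<times> real) set" where
  "Rp2 = {z. 0 \<le> fst z \<and> 0 \<le> snd z}"

text \<open>Elements of M_2: finite nonnegative Borel measures on R_+^2, represented as
  finite Borel measures on R^2 that put no mass outside R_+^2.\<close>
definition M2 :: "(real \<times> real) measure \<Rightarrow> bool" where
  "M2 m \<longleftrightarrow> sets m = sets borel \<and> finite_measure m \<and> emeasure m (UNIV - Rp2) = 0"

definition service_dist :: "real measure \<Rightarrow> bool" where
  "service_dist \<Gamma> \<longleftrightarrow> prob_space \<Gamma> \<and> sets \<Gamma> = sets borel
     \<and> emeasure \<Gamma> {..0} = 0 \<and> (\<forall>x. emeasure \<Gamma> {x} = 0)
     \<and> integrable \<Gamma> (\<lambda>x. x)"

definition Gbar :: "real measure \<Rightarrow> real \<Rightarrow> real" where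
  "Gbar \<Gamma> x = 1 - measure \<Gamma> {0..x}"

definition workload_sol ::
  "nat \<Rightarrow> (nat \<Rightarrow> real) \<Rightarrow> (nat \<Rightarrow> real) \<Rightarrow> (nat \<Rightarrow> real measure) \<Rightarrow> (real \<Rightarrow> real) \<Rightarrow> bool" where
  "workload_sol K lam mu \<Gamma> w \<longleftrightarrow>
     (\<forall>t\<ge>0. 0 \<le> w t) \<and>
     (\<forall>t\<ge>0. \<forall>k\<in>{1..K}. (\<lambda>s. Gbar (\<Gamma> k) (w s)) integrable_on {0..t}) \<and>
     (\<forall>t\<ge>0. w t = w 0 + (\<Sum>k\<in>{1..K}. (lam k / mu k) * integral {0..t} (\<lambda>s. Gbar (\<Gamma> k) (w s))) - t)"

definition mplus :: "nat \<Rightarrow> (nat \<Rightarrow> (real \<times> real) measure) \<Rightarrow> (real \<times> real) set \<Rightarrow> ennreal" where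
  "mplus K \<theta> A = (\<Sum>k\<in>{1..K}. emeasure (\<theta> k) A)"

definition wset :: "nat \<Rightarrow> (nat \<Rightarrow> (real \<times> real) measure) \<Rightarrow> real set" where
  "wset K \<theta> = {x. 0 \<le> x \<and> mplus K \<theta> ({x..} \<times> {0..}) > 0}"

text \<open>w_theta; the supremum of the empty set is taken to be 0 (the case theta_+ = 0).\<close>
definition wtheta :: "nat \<Rightarrow> (nat \<Rightarrow> (real \<times> real) measure) \<Rightarrow> real" where
  "wtheta K \<theta> = (if wset K \<theta> = {} then 0 else Sup (wset K \<theta>))"

definition shift :: "(real \<times> real) set \<Rightarrow> real \<times> real \<Rightarrow> (real \<times> real) set" where
  "shift B x = {y \<in> Rp2. y - x \<in> B}"

definition shiftt :: "(real \<times> real) set \<Rightarrow> real \<Rightarrow> (real \<times> real) set" where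
  "shiftt B t = shift B (t, t)"

definition enlarge :: "(real \<times> real) set \<Rightarrow> real \<Rightarrow> (real \<times> real) set" where
  "enlarge B \<kappa> = {z \<in> Rp2. (INF y\<in>B. norm (z - y)) < \<kappa>}"

definition Cset :: "(real \<times> real) set" where
  "Cset = (UNIV \<times> {0} \<inter> Rp2) \<union> ({0} \<times> UNIV \<inter> Rp2)"

definition Iset :: "nat \<Rightarrow> (nat \<Rightarrow> real measure) \<Rightarrow> (nat \<Rightarrow> (real \<times> real) measure) \<Rightarrow> bool" where
  "Iset K \<Gamma> \<theta> \<longleftrightarrow> (\<forall>k\<in>{1..K}. M2 (\<theta> k)) \<and>
     (\<forall>x\<in>Rp2. mplus K \<theta> (shift Cset x) = 0) \<and>
     bdd_above (wset K \<theta>) \<and>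
     (\<forall>\<epsilon>>0. \<exists>k\<in>{1..K}. Gbar (\<Gamma> k) (wtheta K \<theta> - \<epsilon>) > 0)"

text \<open>(delta^+_a x Gamma)(A): product of the unit mass at a (zero measure if a = 0) with Gamma.\<close>
definition dplus_prod :: "real \<Rightarrow> real measure \<Rightarrow> (real \<times> real) set \<Rightarrow> ennreal" where
  "dplus_prod a \<Gamma> A = (if a > 0 then emeasure \<Gamma> {y. (a, y) \<in> A} else 0)"

definition fluid_sol ::
  "nat \<Rightarrow> (nat \<Rightarrow> real) \<Rightarrow> (nat \<Rightarrow> real) \<Rightarrow> (nat \<Rightarrow> real measure)
   \<Rightarrow> (nat \<Rightarrow> (real \<times> real) measure) \<Rightarrow> (real \<Rightarrow> nat \<Rightarrow> (real \<times> real) measure) \<Rightarrow> bool" where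
  "fluid_sol K lam mu \<Gamma> \<theta> \<zeta> \<longleftrightarrow>
     (\<forall>t\<ge>0. \<forall>k\<in>{1..K}. M2 (\<zeta> t k)) \<and>
     (\<forall>k\<in>{1..K}. \<zeta> 0 k = \<theta> k) \<and>
     (\<exists>w. workload_sol K lam mu \<Gamma> w \<and> w 0 = wtheta K \<theta> \<and>
        (\<forall>k\<in>{1..K}. \<forall>B\<in>sets borel. B \<subseteq> Rp2 \<longrightarrow> (\<forall>t\<ge>0.
           emeasure (\<zeta> t k) B = emeasure (\<zeta> 0 k) (shiftt B t)
             + ennreal (lam k) * (\<integral>\<^sup>+ s. indicator {0..t} s * dplus_prod (w s) (\<Gamma> k) (shiftt B (t - s)) \<partial>lborel))))"

end

theory Submission
  imports Defs
begin


lemma small_ball_from_decseq: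
  fixes \<nu> :: "real measure"
  assumes sets: "sets \<nu> = sets borel" and fin: "finite_measure \<nu>"
    and e: "e > 0" and A: "\<And>n. A n \<in> sets \<nu>" "decseq A"
    and lim: "emeasure \<nu> (\<Inter>n. A n) = 0"
  shows "\<exists>n. emeasure \<nu> (A n) < e"
proof -
  have "(\<lambda>n. emeasure \<nu> (A n)) \<longlonglongrightarrow> emeasure \<nu> (\<Inter>n. A n)"
    using A fin by (intro Lim_emeasure_decseq) (auto simp: finite_measure.emeasure_finite)
  then have "eventually (\<lambda>n. emeasure \<nu> (A n) < e) sequentially"
    using lim e by (auto dest: order_tendstoD)
  then show ?thesis by (auto dest: eventually_happens)
qed

lemma atomless_uniform:
  fixes \<nu> :: "real measure"
  assumes sets: "sets \<nu> = sets borel" and fin: "finite_measure \<nu>"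
    and atom: "\<And>c. emeasure \<nu> {c} = 0" and e: "e > 0"
  shows "\<exists>\<kappa>>0. \<forall>c. emeasure \<nu> (ball c \<kappa>) < e"
proof -
  have "\<exists>n. emeasure \<nu> (UNIV - {- real n..real n}) < e"
  proof (rule small_ball_from_decseq[OF sets fin e])
    show "\<And>n. UNIV - {- real n..real n} \<in> sets \<nu>" using sets by auto
    show "decseq (\<lambda>n. UNIV - {- real n..real n})" by (auto simp: decseq_def)
    have "(\<Inter>n. UNIV - {- real n..real n}) = {}"
    proof (auto)
      fix x :: real
      obtain n where "\<bar>x\<bar> \<le> real n" using real_arch_simple by blast
      then show "\<exists>n. - real n \<le> x \<and> x \<le> real n" by (intro exI[of _ n]) auto
    qed
    then show "emeasure \<nu> (\<Inter>n. UNIV - {- real n..real n}) = 0" by (simp only:) simp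
  qed
  then obtain M where M: "emeasure \<nu> (UNIV - {- real M..real M}) < e" by blast
  have pt: "\<exists>\<delta>>0. emeasure \<nu> (ball x \<delta>) < e" for x
  proof -
    have "\<exists>n. emeasure \<nu> (ball x (1 / (real n + 1))) < e"
    proof (rule small_ball_from_decseq[OF sets fin e])
      show "\<And>n. ball x (1 / (real n + 1)) \<in> sets \<nu>" using sets by auto
      show "decseq (\<lambda>n. ball x (1 / (real n + 1)))"
        by (auto simp: decseq_def intro!: subset_ball frac_le)
      have "(\<Inter>n. ball x (1 / (real n + 1))) = {x}"
      proof (auto)
        fix y assume "\<forall>n. dist x y < 1 / (real n + 1)"
        show "y = x"
        proof (rule ccontr)
          assume "y \<noteq> x"
          then have "dist x y > 0" by simp
          then obtain n where n: "inverse (real (Suc n)) < dist x y" using reals_Archimedean by blast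
          have "dist x y < 1 / (real n + 1)" using \<open>\<forall>n. dist x y < 1 / (real n + 1)\<close> by blast
          with n show False by (simp add: inverse_eq_divide add.commute)
        qed
      qed
      then show "emeasure \<nu> (\<Inter>n. ball x (1 / (real n + 1))) = 0" using atom by simp
    qed
    then obtain n where "emeasure \<nu> (ball x (1 / (real n + 1))) < e" by blast
    then show ?thesis by (intro exI[of _ "1 / (real n + 1)"]) auto
  qed
  define G where "G = {ball x \<delta> | x \<delta>. \<delta> > 0 \<and> emeasure \<nu> (ball x \<delta>) < e}"
  have "cball 0 (real M + 1) \<subseteq> \<Union>G"
  proof
    fix x :: real assume "x \<in> cball 0 (real M + 1)"
    obtain \<delta> where "\<delta> > 0" "emeasure \<nu> (ball x \<delta>) < e" using pt by blast
    then show "x \<in> \<Union>G" unfolding G_def by force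
  qed
  then obtain r where r: "r > 0" "\<And>x. x \<in> cball 0 (real M + 1) \<Longrightarrow> \<exists>U\<in>G. ball x r \<subseteq> U"
    by (rule Heine_Borel_lemma[OF compact_cball]) (auto simp: G_def)
  show ?thesis
  proof (intro exI[of _ "min r 1"] conjI allI)
    show "min r 1 > 0" using r by simp
    fix c :: real
    show "emeasure \<nu> (ball c (min r 1)) < e"
    proof (cases "\<bar>c\<bar> \<le> real M + 1")
      case True
      then obtain U where U: "U \<in> G" "ball c r \<subseteq> U" using r(2)[of c] by auto
      then obtain x \<delta> where "U = ball x \<delta>" "emeasure \<nu> (ball x \<delta>) < e" unfolding G_def by blast
      moreover have "ball c (min r 1) \<subseteq> U" using U by auto
      ultimately have "emeasure \<nu> (ball c (min r 1)) \<le> emeasure \<nu> (ball x \<delta>)"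
        using sets by (intro emeasure_mono) auto
      then show ?thesis using \<open>emeasure \<nu> (ball x \<delta>) < e\<close> by (rule order.strict_trans1)
    next
      case False
      then have "ball c (min r 1) \<subseteq> UNIV - {- real M..real M}" by (auto simp: dist_real_def)
      then have "emeasure \<nu> (ball c (min r 1)) \<le> emeasure \<nu> (UNIV - {- real M..real M})"
        using sets by (intro emeasure_mono) auto
      then show ?thesis using M by (rule order.strict_trans1)
    qed
  qed
qed



lemma Gbar_props:
  assumes "service_dist \<Gamma>"
  shows "0 \<le> Gbar \<Gamma> x" "Gbar \<Gamma> x \<le> 1" "x \<le> y \<Longrightarrow> Gbar \<Gamma> y \<le> Gbar \<Gamma> x"
proof -
  interpret prob_space \<Gamma> using assms by (simp add: service_dist_def)
  have s: "sets \<Gamma> = sets borel" using assms by (simp add: service_dist_def)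
  show "0 \<le> Gbar \<Gamma> x" by (simp add: Gbar_def)
  show "Gbar \<Gamma> x \<le> 1" by (simp add: Gbar_def)
  assume "x \<le> y"
  then have "measure \<Gamma> {0..x} \<le> measure \<Gamma> {0..y}"
    using s by (intro finite_measure_mono) auto
  then show "Gbar \<Gamma> y \<le> Gbar \<Gamma> x" by (simp add: Gbar_def)
qed

lemma workload_props:
  fixes w :: "real \<Rightarrow> real"
  assumes ws: "workload_sol K lam mu \<Gamma> w"
    and lam: "\<forall>k\<in>{1..K}. lam k > 0" and mu: "\<forall>k\<in>{1..K}. mu k > 0"
    and Gam: "\<forall>k\<in>{1..K}. service_dist (\<Gamma> k)"
    and I: "\<forall>\<epsilon>>0. \<exists>k\<in>{1..K}. Gbar (\<Gamma> k) (w 0 - \<epsilon>) > 0"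
    and T: "T \<ge> 0"
  shows "continuous_on {0..T} w" "\<And>a b. 0 \<le> a \<Longrightarrow> a < b \<Longrightarrow> b \<le> T \<Longrightarrow> w a + a < w b + b"
proof -
  define g where "g k s = Gbar (\<Gamma> k) (w s)" for k s
  define \<rho> where "\<rho> k = lam k / mu k" for k
  have \<rho>pos: "\<rho> k > 0" if "k \<in> {1..K}" for k using lam mu that by (simp add: \<rho>_def)
  have gint: "g k integrable_on {x..y}" if "k \<in> {1..K}" "0 \<le> x" for k x y
  proof (cases "x \<le> y")
    case True
    have "g k integrable_on {0..y}" using ws that True unfolding workload_sol_def g_def by auto
    then show ?thesis by (rule integrable_on_subinterval) (use that in auto)
  next
    case False then show ?thesis by (simp add: integrable_on_empty)
  qed
  have g01: "0 \<le> g k s" "g k s \<le> 1" if "k \<in> {1..K}" for k s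
    using Gbar_props Gam that unfolding g_def by auto
  have weq: "w t = w 0 + (\<Sum>k\<in>{1..K}. \<rho> k * integral {0..t} (g k)) - t" if "t \<ge> 0" for t
    using ws that unfolding workload_sol_def g_def \<rho>_def by blast
  have Ipos: "0 \<le> integral {x..y} (g k)" if "k \<in> {1..K}" "0 \<le> x" for k x y
  proof -
    have "integral {x..y} (\<lambda>_. 0::real) \<le> integral {x..y} (g k)"
      by (rule integral_le) (use gint[OF that] g01[OF that(1)] in auto)
    then show ?thesis by simp
  qed
  have fdiff: "(w y + y) - (w x + x) = (\<Sum>k\<in>{1..K}. \<rho> k * integral {x..y} (g k))"
    if "0 \<le> x" "x \<le> y" for x y
  proof -
    have "integral {0..x} (g k) + integral {x..y} (g k) = integral {0..y} (g k)" if "k \<in> {1..K}" for k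
      using Henstock_Kurzweil_Integration.integral_combine[where a=0 and c=x and b=y and f="g k"] gint[of k 0 y] that \<open>0 \<le> x\<close> \<open>x \<le> y\<close> by simp
    then have "(\<Sum>k\<in>{1..K}. \<rho> k * integral {0..y} (g k)) = (\<Sum>k\<in>{1..K}. \<rho> k * integral {0..x} (g k) + \<rho> k * integral {x..y} (g k))"
      by (intro sum.cong refl) (simp flip: distrib_left)
    then have "(\<Sum>k\<in>{1..K}. \<rho> k * integral {0..y} (g k)) - (\<Sum>k\<in>{1..K}. \<rho> k * integral {0..x} (g k))
       = (\<Sum>k\<in>{1..K}. \<rho> k * integral {x..y} (g k))"
      by (simp add: sum.distrib)
    then show ?thesis using weq[of x] weq[of y] that by simp
  qed
  have fmono: "w x + x \<le> w y + y" if "0 \<le> x" "x \<le> y" for x y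
  proof -
    have "0 \<le> (\<Sum>k\<in>{1..K}. \<rho> k * integral {x..y} (g k))"
      by (intro sum_nonneg mult_nonneg_nonneg) (use \<rho>pos Ipos that in \<open>auto intro: less_imp_le\<close>)
    then show ?thesis using fdiff[OF that] by simp
  qed
  have flat0: "integral {x..y} (g k) = 0" if "0 \<le> x" "x \<le> y" "w x + x = w y + y" "k \<in> {1..K}" for x y k
  proof -
    have "(\<Sum>k\<in>{1..K}. \<rho> k * integral {x..y} (g k)) = 0" using fdiff[of x y] that by simp
    moreover have "\<forall>k\<in>{1..K}. 0 \<le> \<rho> k * integral {x..y} (g k)"
    proof
      fix k assume k: "k \<in> {1..K}"
      show "0 \<le> \<rho> k * integral {x..y} (g k)"
        using \<rho>pos[OF k] Ipos[OF k \<open>0 \<le> x\<close>, of y] by simp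
    qed
    ultimately have "\<forall>k\<in>{1..K}. \<rho> k * integral {x..y} (g k) = 0"
      by (subst (asm) sum_nonneg_eq_0_iff) auto
    then show ?thesis using \<rho>pos[of k] that(4) by force
  qed
  have zero_flat: "w x + x = w y + y" if xy: "0 \<le> x" "x \<le> y" and z: "\<And>k s. k \<in> {1..K} \<Longrightarrow> s \<in> {x..y} \<Longrightarrow> g k s = 0" for x y
  proof -
    have "integral {x..y} (g k) = 0" if "k \<in> {1..K}" for k
    proof -
      have "integral {x..y} (g k) = integral {x..y} (\<lambda>_. 0::real)"
        by (rule integral_cong) (use z that in auto)
      then show ?thesis by simp
    qed
    then show ?thesis using fdiff[OF xy] by simp
  qed
  have cont: "continuous_on {0..T} w"
  proof -
    have "continuous_on {0..T} (\<lambda>s. w 0 + (\<Sum>k\<in>{1..K}. \<rho> k * integral {0..s} (g k)) - s)"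
    proof -
      have "continuous_on {0..T} (\<lambda>s. \<rho> k * integral {0..s} (g k))" if "k \<in> {1..K}" for k
        by (rule continuous_on_mult_left, rule indefinite_integral_continuous_1, rule gint) (use that in auto)
      then have "continuous_on {0..T} (\<lambda>s. (\<Sum>k\<in>{1..K}. \<rho> k * integral {0..s} (g k)))"
        by (rule continuous_on_sum)
      then show ?thesis
        by (rule continuous_on_diff[OF continuous_on_add[OF continuous_on_const] continuous_on_id])
    qed
    then show ?thesis
    proof (rule continuous_on_eq)
      fix s :: real assume "s \<in> {0..T}"
      then show "w 0 + (\<Sum>k\<in>{1..K}. \<rho> k * integral {0..s} (g k)) - s = w s"
        using weq[of s] by (simp add: atLeastAtMost_iff)
    qed
  qed
  then show "continuous_on {0..T} w" .
  fix a b assume ab: "0 \<le> a" "a < b" "b \<le> T"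
  show "w a + a < w b + b"
  proof (rule ccontr)
    assume "\<not> w a + a < w b + b"
    then have fab: "w a + a = w b + b" using fmono[of a b] ab by simp
    define m where "m = (a + b) / 2"
    have m: "a < m" "m < b" using ab by (auto simp: m_def)
    have fmb: "w m + m = w b + b" using fmono[of a m] fmono[of m b] fab m ab by simp
    have fma: "w m + m = w a + a" using fmb fab by simp
    have gm: "g k m = 0" if k: "k \<in> {1..K}" for k
    proof -
      have i0: "integral {m..b} (g k) = 0" using flat0[of m b k] fmb m ab k by simp
      have "w s \<le> w m" if "s \<in> {m..b}" for s
        using fmono[of m s] fmono[of s b] fmb that m ab by auto
      then have "g k m \<le> g k s" if "s \<in> {m..b}" for s
        using Gbar_props(3) Gam k that unfolding g_def by blast
      then have "integral {m..b} (\<lambda>_. g k m) \<le> integral {m..b} (g k)"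
        by (intro integral_le gint k) (use m ab in auto)
      then have "(b - m) * g k m \<le> 0" using i0 m by simp
      then have "g k m \<le> 0" using m by (simp add: mult_le_0_iff)
      then show ?thesis using g01[OF k, of m] by simp
    qed
    define c where "c = w m"
    have Z: "Gbar (\<Gamma> k) x = 0" if "k \<in> {1..K}" "c \<le> x" for k x
    proof -
      have sd: "service_dist (\<Gamma> k)" using Gam that(1) by blast
      have "Gbar (\<Gamma> k) x \<le> Gbar (\<Gamma> k) c" by (rule Gbar_props(3)[OF sd that(2)])
      moreover have "Gbar (\<Gamma> k) c = 0" using gm[OF that(1)] by (simp add: g_def c_def)
      ultimately show ?thesis using Gbar_props(1)[OF sd, of x] by linarith
    qed
    have wa: "w a = c + (m - a)" using fma by (simp add: c_def)
    have backw: "w r = w a + (a - r)" if r: "0 \<le> r" "r \<le> a" and gt: "\<forall>s\<in>{r..a}. c \<le> w s" for r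
    proof -
      have "w r + r = w a + a"
        by (rule zero_flat) (use r gt Z in \<open>auto simp: g_def\<close>)
      then show ?thesis by simp
    qed
    define D where "D = {s\<in>{0..a}. w s \<le> c}"
    show False
    proof (cases "D = {}")
      case True
      then have "\<forall>s\<in>{0..a}. c \<le> w s" unfolding D_def by auto
      then have w0: "w 0 = w a + a" using backw[of 0] ab by simp
      define \<epsilon> where "\<epsilon> = w a + a - c"
      have "\<epsilon> > 0" using wa m ab by (simp add: \<epsilon>_def)
      then obtain k where k: "k \<in> {1..K}" "Gbar (\<Gamma> k) (w 0 - \<epsilon>) > 0" using I by blast
      have "w 0 - \<epsilon> = c" using w0 by (simp add: \<epsilon>_def)
      then show False using Z[OF k(1), of "w 0 - \<epsilon>"] k by simp
    next
      case False
      have "continuous_on {0..a} w" by (rule continuous_on_subset[OF cont]) (use ab in auto)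
      then have "closed ({0..a} \<inter> w -` {..c})" by (rule continuous_closed_preimage) auto
      moreover have "{0..a} \<inter> w -` {..c} = D" unfolding D_def by auto
      ultimately have "closed D" by simp
      moreover have bdd: "bdd_above D" unfolding D_def by (auto intro: bdd_aboveI[of _ a])
      ultimately have s1D: "Sup D \<in> D" using False closed_contains_Sup by blast
      define s1 where "s1 = Sup D"
      have s1: "0 \<le> s1" "s1 \<le> a" "w s1 \<le> c" using s1D unfolding D_def s1_def by auto
      have s1a: "s1 < a" using s1 wa m by (cases "s1 = a") auto
      have after: "w a \<le> w r" if "s1 < r" "r \<le> a" for r
      proof -
        have "c \<le> w s" if "s \<in> {r..a}" for s
        proof (rule ccontr)
          assume "\<not> c \<le> w s"
          then have "s \<in> D" using that \<open>s1 < r\<close> s1 unfolding D_def by auto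
          then have "s \<le> s1" unfolding s1_def using bdd by (rule cSup_upper)
          then show False using that \<open>s1 < r\<close> by auto
        qed
        then have "w r = w a + (a - r)" using backw[of r] that s1 by auto
        then show ?thesis using that by simp
      qed
      have "w a - c > 0" using wa m by simp
      moreover have "s1 \<in> {0..T}" using s1 ab by auto
      then have "\<forall>e>0. \<exists>d>0. \<forall>x'\<in>{0..T}. dist x' s1 < d \<longrightarrow> dist (w x') (w s1) < e"
        using cont unfolding continuous_on_iff by blast
      ultimately obtain dd where dd: "dd > 0" "\<forall>x'\<in>{0..T}. dist x' s1 < dd \<longrightarrow> dist (w x') (w s1) < w a - c"
        by blast
      define r where "r = min a (s1 + dd / 2)"
      have r1: "s1 < r" "r \<le> a" using s1a dd by (auto simp: r_def)
      have "dist r s1 < dd" using r1 dd by (auto simp: r_def dist_real_def)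
      moreover have "r \<in> {0..T}" using r1 s1 ab by auto
      ultimately have "dist (w r) (w s1) < w a - c" using dd by blast
      moreover have "w a \<le> w r" by (rule after[OF r1])
      ultimately show False using s1 by (auto simp: dist_real_def)
    qed
  qed
qed

lemma uniform_family:
  fixes \<M> :: "real measure set"
  assumes "finite \<M>" "\<forall>\<nu>\<in>\<M>. sets \<nu> = sets borel \<and> finite_measure \<nu> \<and> (\<forall>c. emeasure \<nu> {c} = 0)" "e > 0"
  shows "\<exists>\<kappa>>0. \<forall>\<nu>\<in>\<M>. \<forall>c. emeasure \<nu> (ball c \<kappa>) < e"
  using assms(1,2)
proof (induction rule: finite_induct)
  case empty
  show ?case by (intro exI[of _ 1]) auto
next
  case (insert \<nu> \<M>)
  then obtain \<kappa>1 where k1: "\<kappa>1 > 0" "\<forall>\<mu>\<in>\<M>. \<forall>c. emeasure \<mu> (ball c \<kappa>1) < e" by auto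
  have nu: "sets \<nu> = sets borel" "finite_measure \<nu>" "\<And>c. emeasure \<nu> {c} = 0" using insert.prems by auto
  obtain \<kappa>2 where k2: "\<kappa>2 > 0" "\<forall>c. emeasure \<nu> (ball c \<kappa>2) < e"
    using atomless_uniform[OF nu assms(3)] by blast
  show ?case
  proof (intro exI[of _ "min \<kappa>1 \<kappa>2"] conjI ballI allI)
    show "min \<kappa>1 \<kappa>2 > 0" using k1 k2 by simp
    fix \<mu> c assume mu: "\<mu> \<in> insert \<nu> \<M>"
    have sm: "sets \<mu> = sets borel" using mu insert.prems by auto
    show "emeasure \<mu> (ball c (min \<kappa>1 \<kappa>2)) < e"
    proof (cases "\<mu> = \<nu>")
      case True
      have "emeasure \<mu> (ball c (min \<kappa>1 \<kappa>2)) \<le> emeasure \<mu> (ball c \<kappa>2)"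
        using sm by (intro emeasure_mono) auto
      then show ?thesis using k2 True by (metis order.strict_trans1)
    next
      case False
      then have "\<mu> \<in> \<M>" using mu by auto
      have "emeasure \<mu> (ball c (min \<kappa>1 \<kappa>2)) \<le> emeasure \<mu> (ball c \<kappa>1)"
        using sm by (intro emeasure_mono) auto
      then show ?thesis using k1 \<open>\<mu> \<in> \<M>\<close> by (metis order.strict_trans1)
    qed
  qed
qed

lemma pushforward_props:
  fixes F :: "real \<Rightarrow> real"
  assumes cont: "continuous_on UNIV F"
    and strict: "\<And>a b. 0 \<le> a \<Longrightarrow> a < b \<Longrightarrow> b \<le> T \<Longrightarrow> F a < F b" and T: "T \<ge> 0"
  defines "\<nu> \<equiv> distr (density lborel (indicator {0..T})) borel F"
  shows "sets \<nu> = sets borel" "finite_measure \<nu>" "\<And>c. emeasure \<nu> {c} = 0"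
    "\<And>A. A \<in> sets borel \<Longrightarrow> emeasure \<nu> A = emeasure lborel ({0..T} \<inter> F -` A)"
proof -
  have Fm: "F \<in> borel_measurable borel" by (rule borel_measurable_continuous_onI[OF cont])
  then have Fm': "F \<in> measurable (density lborel (indicator {0..T})) borel" by simp
  show "sets \<nu> = sets borel" unfolding \<nu>_def by simp
  show em: "emeasure \<nu> A = emeasure lborel ({0..T} \<inter> F -` A)" if A: "A \<in> sets borel" for A
  proof -
    have "emeasure \<nu> A = emeasure (density lborel (indicator {0..T})) (F -` A)"
      unfolding \<nu>_def by (subst emeasure_distr[OF Fm' A]) simp
    also have "\<dots> = (\<integral>\<^sup>+ x. indicator {0..T} x * indicator (F -` A) x \<partial>lborel)"
      using Fm A by (intro emeasure_density) (auto simp: measurable_sets_borel)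
    also have "\<dots> = (\<integral>\<^sup>+ x. indicator ({0..T} \<inter> F -` A) x \<partial>lborel)"
      by (simp add: indicator_inter_arith)
    also have "\<dots> = emeasure lborel ({0..T} \<inter> F -` A)"
      using Fm A by (intro nn_integral_indicator) (auto simp: measurable_sets_borel)
    finally show ?thesis .
  qed
  have "emeasure \<nu> (space \<nu>) = emeasure lborel ({0..T} \<inter> F -` UNIV)"
    by (subst em[symmetric]) (auto simp: \<nu>_def)
  also have "\<dots> = ennreal T" using T by simp
  finally show "finite_measure \<nu>" by (intro finite_measureI) simp
  fix c
  have "{0..T} \<inter> F -` {c} \<subseteq> {x. x \<in> {0..T} \<inter> F -` {c}} \<and> (\<forall>x y. x \<in> {0..T} \<inter> F -` {c} \<longrightarrow> y \<in> {0..T} \<inter> F -` {c} \<longrightarrow> x = y)"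
  proof (intro conjI allI impI)
    fix x y assume "x \<in> {0..T} \<inter> F -` {c}" "y \<in> {0..T} \<inter> F -` {c}"
    then show "x = y" using strict[of x y] strict[of y x] by (cases x y rule: linorder_cases) auto
  qed auto
  then have sub: "\<exists>x0. {0..T} \<inter> F -` {c} \<subseteq> {x0}" by blast
  then obtain x0 where "{0..T} \<inter> F -` {c} \<subseteq> {x0}" by blast
  then have "emeasure lborel ({0..T} \<inter> F -` {c}) \<le> emeasure lborel {x0}"
    by (intro emeasure_mono) auto
  then show "emeasure \<nu> {c} = 0" using em[of "{c}"] by simp
qed

lemma shift_Cset_eq:
  "shift Cset x = {y. 0 \<le> fst y \<and> 0 \<le> snd y \<and> ((snd y = snd x \<and> fst x \<le> fst y) \<or> (fst y = fst x \<and> snd x \<le> snd y))}"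
  by (cases x) (auto simp: shift_def Cset_def Rp2_def)

lemma cfst: "continuous_on UNIV (fst :: real \<times> real \<Rightarrow> real)"
  using continuous_on_fst[OF continuous_on_id] by simp
lemma csnd: "continuous_on UNIV (snd :: real \<times> real \<Rightarrow> real)"
  using continuous_on_snd[OF continuous_on_id] by simp

lemma Rp2_eq: "Rp2 = fst -` {0..} \<inter> snd -` {0..}"
  by (auto simp: Rp2_def)

lemma Rp2_closed: "closed Rp2"
  unfolding Rp2_eq
  by (rule closed_Int; rule closed_vimage) (auto intro: cfst csnd)

lemma Rp2_borel: "Rp2 \<in> sets borel"
  by (rule borel_closed[OF Rp2_closed])

lemma shift_Cset_eq2:
  "shift Cset x = Rp2 \<inter> ((snd -` {snd x} \<inter> fst -` {fst x..}) \<union> (fst -` {fst x} \<inter> snd -` {snd x..}))"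
  unfolding shift_Cset_eq Rp2_def by auto

lemma shift_Cset_borel: "shift Cset x \<in> sets borel"
proof -
  have "closed ((snd -` {snd x} \<inter> fst -` {fst x..}) \<union> (fst -` {fst x} \<inter> snd -` {snd x..}))"
    by (rule closed_Un; rule closed_Int; rule closed_vimage) (auto intro: cfst csnd)
  then have "closed (shift Cset x)" unfolding shift_Cset_eq2 using Rp2_closed by (rule closed_Int[rotated])
  then show ?thesis by (rule borel_closed)
qed

lemma enlarge_sub:
  assumes p: "p \<in> Rp2"
  shows "enlarge (shift Cset p) \<kappa> \<subseteq> Rp2 \<inter> ({z. dist (fst z) (fst p) < \<kappa>} \<union> {z. dist (snd z) (snd p) < \<kappa>})"
proof
  fix z assume z: "z \<in> enlarge (shift Cset p) \<kappa>"
  have "p \<in> shift Cset p" using p by (auto simp: shift_Cset_eq Rp2_def)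
  then have ne: "(\<lambda>y. norm (z - y)) ` shift Cset p \<noteq> {}" by blast
  from z have "Inf ((\<lambda>y. norm (z - y)) ` shift Cset p) < \<kappa>" "z \<in> Rp2" by (auto simp: enlarge_def)
  then obtain y where y: "y \<in> shift Cset p" "norm (z - y) < \<kappa>" using cInf_lessD[OF ne] by blast
  obtain z1 z2 y1 y2 where zy: "z = (z1, z2)" "y = (y1, y2)" by (cases z, cases y) auto
  have n1: "\<bar>z1 - y1\<bar> < \<kappa>" "\<bar>z2 - y2\<bar> < \<kappa>"
    using y(2) norm_fst_le[of "z1 - y1" "z2 - y2"] norm_snd_le[of "z2 - y2" "z1 - y1"] zy by auto
  from y(1) have "y2 = snd p \<or> y1 = fst p" unfolding shift_Cset_eq zy by auto
  then show "z \<in> Rp2 \<inter> ({z. dist (fst z) (fst p) < \<kappa>} \<union> {z. dist (snd z) (snd p) < \<kappa>})"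
    using n1 \<open>z \<in> Rp2\<close> zy by (auto simp: dist_real_def)
qed

lemma proj_props:
  fixes m :: "(real \<times> real) measure"
  assumes M: "M2 m" and lz: "\<forall>x\<in>Rp2. emeasure m (shift Cset x) = 0"
  shows "sets (distr m borel fst) = sets borel" "finite_measure (distr m borel fst)"
    "\<forall>c. emeasure (distr m borel fst) {c} = 0"
    "sets (distr m borel snd) = sets borel" "finite_measure (distr m borel snd)"
    "\<forall>c. emeasure (distr m borel snd) {c} = 0"
    "\<And>A. A \<in> sets borel \<Longrightarrow> emeasure m (fst -` A) = emeasure (distr m borel fst) A"
    "\<And>A. A \<in> sets borel \<Longrightarrow> emeasure m (snd -` A) = emeasure (distr m borel snd) A"
proof -
  have sm: "sets m = sets borel" and fm: "finite_measure m" and out: "emeasure m (UNIV - Rp2) = 0"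
    using M by (auto simp: M2_def)
  have sp: "space m = UNIV" using sets_eq_imp_space_eq[OF sm] by simp
  have mf: "fst \<in> measurable m borel"
    using borel_measurable_continuous_onI[OF cfst] by (simp add: measurable_cong_sets[OF sm refl])
  have ms: "snd \<in> measurable m borel"
    using borel_measurable_continuous_onI[OF csnd] by (simp add: measurable_cong_sets[OF sm refl])
  show ef: "emeasure m (fst -` A) = emeasure (distr m borel fst) A" if "A \<in> sets borel" for A
    using emeasure_distr[OF mf that] sp by simp
  show es: "emeasure m (snd -` A) = emeasure (distr m borel snd) A" if "A \<in> sets borel" for A
    using emeasure_distr[OF ms that] sp by simp
  show "sets (distr m borel fst) = sets borel" "sets (distr m borel snd) = sets borel" by simp_all
  show "finite_measure (distr m borel fst)" "finite_measure (distr m borel snd)"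
    using fm mf ms by (auto intro: finite_measure.finite_measure_distr)
  have Rc: "UNIV - Rp2 \<in> sets m" using sm Rp2_borel by auto
  have fsets: "fst -` A \<in> sets m" "snd -` A \<in> sets m" if "A \<in> sets borel" for A
    using measurable_sets[OF mf that] measurable_sets[OF ms that] sp by auto
  have zero: "emeasure m X = 0" if X: "X \<in> sets m" "X \<inter> Rp2 \<subseteq> shift Cset x" "x \<in> Rp2" for X x
  proof -
    have "X \<subseteq> shift Cset x \<union> (UNIV - Rp2)" using X by auto
    then have "emeasure m X \<le> emeasure m (shift Cset x \<union> (UNIV - Rp2))"
      using sm shift_Cset_borel Rp2_borel by (intro emeasure_mono) auto
    also have "\<dots> \<le> emeasure m (shift Cset x) + emeasure m (UNIV - Rp2)"
      using sm shift_Cset_borel Rp2_borel by (intro emeasure_subadditive) auto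
    also have "\<dots> = 0" using lz X(3) out by simp
    finally show ?thesis by simp
  qed
  show "\<forall>c. emeasure (distr m borel fst) {c} = 0"
  proof
    fix c :: real
    have "emeasure m (fst -` {c}) = 0"
    proof (cases "c \<ge> 0")
      case True
      show ?thesis
      proof (rule zero[of _ "(c, 0)"])
        show "fst -` {c} \<in> sets m" by (rule fsets) simp
        show "fst -` {c} \<inter> Rp2 \<subseteq> shift Cset (c, 0)" by (auto simp: shift_Cset_eq Rp2_def)
        show "(c, 0) \<in> Rp2" using True by (simp add: Rp2_def)
      qed
    next
      case False
      have "emeasure m (fst -` {c}) \<le> emeasure m (UNIV - Rp2)"
        using False Rc by (intro emeasure_mono) (auto simp: Rp2_def)
      then show ?thesis using out by simp
    qed
    then show "emeasure (distr m borel fst) {c} = 0" using ef[of "{c}"] by simp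
  qed
  show "\<forall>c. emeasure (distr m borel snd) {c} = 0"
  proof
    fix c :: real
    have "emeasure m (snd -` {c}) = 0"
    proof (cases "c \<ge> 0")
      case True
      show ?thesis
      proof (rule zero[of _ "(0, c)"])
        show "snd -` {c} \<in> sets m" by (rule fsets) simp
        show "snd -` {c} \<inter> Rp2 \<subseteq> shift Cset (0, c)" by (auto simp: shift_Cset_eq Rp2_def)
        show "(0, c) \<in> Rp2" using True by (simp add: Rp2_def)
      qed
    next
      case False
      have "emeasure m (snd -` {c}) \<le> emeasure m (UNIV - Rp2)"
        using False Rc by (intro emeasure_mono) (auto simp: Rp2_def)
      then show ?thesis using out by simp
    qed
    then show "emeasure (distr m borel snd) {c} = 0" using es[of "{c}"] by simp
  qed
qed


lemma fst_vimage_borel: "A \<in> sets borel \<Longrightarrow> fst -` A \<in> sets (borel :: (real \<times> real) measure)"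
  using measurable_sets[OF borel_measurable_continuous_onI[OF cfst]] by auto
lemma snd_vimage_borel: "A \<in> sets borel \<Longrightarrow> snd -` A \<in> sets (borel :: (real \<times> real) measure)"
  using measurable_sets[OF borel_measurable_continuous_onI[OF csnd]] by auto
theorem lemma4p1:
  fixes K :: nat and lam mu :: "nat \<Rightarrow> real" and \<Gamma> :: "nat \<Rightarrow> real measure"
    and \<theta> :: "nat \<Rightarrow> (real \<times> real) measure"
    and \<zeta> :: "real \<Rightarrow> nat \<Rightarrow> (real \<times> real) measure"
  assumes K: "K \<ge> 1"
    and lam_pos: "\<forall>k\<in>{1..K}. lam k > 0"
    and mu_pos: "\<forall>k\<in>{1..K}. mu k > 0"
    and rho: "(\<Sum>k\<in>{1..K}. lam k / mu k) > 1"
    and Gam: "\<forall>k\<in>{1..K}. service_dist (\<Gamma> k)"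
    and init: "Iset K \<Gamma> \<theta>"
    and sol: "fluid_sol K lam mu \<Gamma> \<theta> \<zeta>"
    and T: "T > 0" and eps: "\<epsilon> > 0"
  shows "\<exists>\<kappa>>0. Max ((\<lambda>k. SUP t\<in>{0..T}. SUP p\<in>Rp2.
            emeasure (\<zeta> t k) (enlarge (shift Cset p) \<kappa>)) ` {1..K}) < ennreal \<epsilon>"
proof -
  from sol obtain w where ws: "workload_sol K lam mu \<Gamma> w" and w0: "w 0 = wtheta K \<theta>"
    and eq: "\<forall>k\<in>{1..K}. \<forall>B\<in>sets borel. B \<subseteq> Rp2 \<longrightarrow> (\<forall>t\<ge>0.
           emeasure (\<zeta> t k) B = emeasure (\<zeta> 0 k) (shiftt B t)
             + ennreal (lam k) * (\<integral>\<^sup>+ s. indicator {0..t} s * dplus_prod (w s) (\<Gamma> k) (shiftt B (t - s)) \<partial>lborel))"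
    and z0: "\<forall>k\<in>{1..K}. \<zeta> 0 k = \<theta> k" and zM: "\<forall>t\<ge>0. \<forall>k\<in>{1..K}. M2 (\<zeta> t k)"
    unfolding fluid_sol_def by blast
  have thM: "\<forall>k\<in>{1..K}. M2 (\<theta> k)" and lines: "\<forall>x\<in>Rp2. mplus K \<theta> (shift Cset x) = 0"
    and Icond: "\<forall>\<epsilon>>0. \<exists>k\<in>{1..K}. Gbar (\<Gamma> k) (w 0 - \<epsilon>) > 0"
    using init w0 unfolding Iset_def by auto
  have lines_k: "\<forall>x\<in>Rp2. emeasure (\<theta> k) (shift Cset x) = 0" if k: "k \<in> {1..K}" for k
  proof
    fix x assume "x \<in> Rp2"
    then have "(\<Sum>j\<in>{1..K}. emeasure (\<theta> j) (shift Cset x)) = 0" using lines by (simp add: mplus_def)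
    then show "emeasure (\<theta> k) (shift Cset x) = 0" using k by (simp add: sum_eq_0_iff)
  qed
  have T0: "T \<ge> 0" using T by simp
  note wp = workload_props[OF ws lam_pos mu_pos Gam Icond T0]
  define h where "h s = max 0 (min T s)" for s :: real
  define F where "F s = w (h s) + h s" for s
  have hc: "continuous_on UNIV h" unfolding h_def by (intro continuous_on_max continuous_on_min continuous_on_const continuous_on_id)
  have hr: "h ` UNIV \<subseteq> {0..T}" using T0 by (auto simp: h_def)
  have Fc: "continuous_on UNIV F" unfolding F_def
    by (rule continuous_on_add[OF continuous_on_compose2[OF wp(1) hc hr] hc])
  have hid: "s \<in> {0..T} \<Longrightarrow> h s = s" for s by (auto simp: h_def)
  have Fstrict: "0 \<le> a \<Longrightarrow> a < b \<Longrightarrow> b \<le> T \<Longrightarrow> F a < F b" for a b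
    using wp(2)[of a b] hid[of a] hid[of b] by (simp add: F_def)
  define \<nu>f where "\<nu>f = distr (density lborel (indicator {0..T})) borel F"
  note pf = pushforward_props[OF Fc Fstrict T0, folded \<nu>f_def]
  define \<Lambda> where "\<Lambda> = (\<Sum>k\<in>{1..K}. lam k)"
  have lamle: "lam k \<le> \<Lambda>" if "k \<in> {1..K}" for k
    unfolding \<Lambda>_def using lam_pos that by (intro member_le_sum) (auto intro: less_imp_le)
  have \<Lambda>0: "\<Lambda> \<ge> 0" unfolding \<Lambda>_def using lam_pos by (intro sum_nonneg) (auto intro: less_imp_le)
  define \<delta> where "\<delta> = \<epsilon> / (3 + \<Lambda> * (1 + T))"
  have den: "3 + \<Lambda> * (1 + T) > 0" using \<Lambda>0 T0 by (simp add: add_pos_nonneg)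
  have \<delta>0: "\<delta> > 0" using eps den by (simp add: \<delta>_def)
  define \<M> where "\<M> = {\<nu>f} \<union> (\<lambda>k. distr (\<theta> k) borel fst) ` {1..K} \<union> (\<lambda>k. distr (\<theta> k) borel snd) ` {1..K} \<union> \<Gamma> ` {1..K}"
  have Mfin: "finite \<M>" unfolding \<M>_def by simp
  have Mprops: "\<forall>\<nu>\<in>\<M>. sets \<nu> = sets borel \<and> finite_measure \<nu> \<and> (\<forall>c. emeasure \<nu> {c} = 0)"
  proof -
    have "sets \<Gamma>' = sets borel \<and> finite_measure \<Gamma>' \<and> (\<forall>c. emeasure \<Gamma>' {c} = 0)" if "service_dist \<Gamma>'" for \<Gamma>'
    proof -
      interpret prob_space \<Gamma>' using that by (simp add: service_dist_def)
      show ?thesis using that finite_measure_axioms by (simp add: service_dist_def)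
    qed
    then show ?thesis unfolding \<M>_def
      using pf(1-3) proj_props[OF _ lines_k] thM Gam by auto
  qed
  obtain \<kappa> where \<kappa>: "\<kappa> > 0" "\<forall>\<nu>\<in>\<M>. \<forall>c. emeasure \<nu> (ball c \<kappa>) < ennreal \<delta>"
    using uniform_family[OF Mfin Mprops, of "ennreal \<delta>"] \<delta>0 by auto
  define Bnd where "Bnd = 2 * \<delta> + \<Lambda> * (\<delta> + \<delta> * T)"
  have Bnd: "Bnd < \<epsilon>"
  proof -
    have "Bnd = \<delta> * (2 + \<Lambda> * (1 + T))" by (simp add: Bnd_def algebra_simps)
    also have "\<dots> < \<delta> * (3 + \<Lambda> * (1 + T))" using \<delta>0 by simp
    also have "\<dots> = \<epsilon>" using den by (simp add: \<delta>_def)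
    finally show ?thesis .
  qed
  have main: "emeasure (\<zeta> t k) (enlarge (shift Cset p) \<kappa>) \<le> ennreal Bnd"
    if k: "k \<in> {1..K}" and t: "t \<in> {0..T}" and p: "p \<in> Rp2" for k t p
  proof -
    have t0: "0 \<le> t" "t \<le> T" using t by auto
    define B1 where "B1 = ball (fst p + t) \<kappa>"
    define S where "S = Rp2 \<inter> (fst -` ball (fst p) \<kappa> \<union> snd -` ball (snd p) \<kappa>)"
    have Sb: "S \<in> sets borel" unfolding S_def
      using Rp2_borel fst_vimage_borel[of "ball (fst p) \<kappa>"] snd_vimage_borel[of "ball (snd p) \<kappa>"] by auto
    have SR: "S \<subseteq> Rp2" unfolding S_def by auto
    have ES: "enlarge (shift Cset p) \<kappa> \<subseteq> S"
      using enlarge_sub[OF p, of \<kappa>] unfolding S_def by (auto simp: dist_commute)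
    have zs: "sets (\<zeta> t k) = sets borel" using zM t0 k by (auto simp: M2_def)
    have "emeasure (\<zeta> t k) (enlarge (shift Cset p) \<kappa>) \<le> emeasure (\<zeta> t k) S"
      using ES Sb zs by (intro emeasure_mono) auto
    also have "\<dots> = emeasure (\<theta> k) (shiftt S t)
       + ennreal (lam k) * (\<integral>\<^sup>+ s. indicator {0..t} s * dplus_prod (w s) (\<Gamma> k) (shiftt S (t - s)) \<partial>lborel)"
      using eq k Sb SR t0 z0 by auto
    also have "\<dots> \<le> (ennreal \<delta> + ennreal \<delta>) + ennreal (lam k) * (ennreal \<delta> + ennreal \<delta> * ennreal T)"
    proof (intro add_mono mult_left_mono)
      have thk: "M2 (\<theta> k)" using thM k by auto
      note pp = proj_props[OF thk lines_k[OF k]]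
      have st: "shiftt S t \<subseteq> fst -` ball (fst p + t) \<kappa> \<union> snd -` ball (snd p + t) \<kappa>"
        by (auto simp: shiftt_def shift_def S_def dist_real_def)
      have sb: "sets (\<theta> k) = sets borel" using thk by (simp add: M2_def)
      have "emeasure (\<theta> k) (shiftt S t) \<le> emeasure (\<theta> k) (fst -` ball (fst p + t) \<kappa> \<union> snd -` ball (snd p + t) \<kappa>)"
        using st sb fst_vimage_borel snd_vimage_borel by (intro emeasure_mono) auto
      also have "\<dots> \<le> emeasure (\<theta> k) (fst -` ball (fst p + t) \<kappa>) + emeasure (\<theta> k) (snd -` ball (snd p + t) \<kappa>)"
        using sb fst_vimage_borel snd_vimage_borel by (intro emeasure_subadditive) auto
      also have "\<dots> = emeasure (distr (\<theta> k) borel fst) (ball (fst p + t) \<kappa>) + emeasure (distr (\<theta> k) borel snd) (ball (snd p + t) \<kappa>)"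
        using pp(7,8) by simp
      also have "\<dots> \<le> ennreal \<delta> + ennreal \<delta>"
      proof (intro add_mono less_imp_le)
        have "distr (\<theta> k) borel fst \<in> \<M>" "distr (\<theta> k) borel snd \<in> \<M>" using k unfolding \<M>_def by auto
        then show "emeasure (distr (\<theta> k) borel fst) (ball (fst p + t) \<kappa>) < ennreal \<delta>"
          "emeasure (distr (\<theta> k) borel snd) (ball (snd p + t) \<kappa>) < ennreal \<delta>" using \<kappa>(2) by auto
      qed
      finally show "emeasure (\<theta> k) (shiftt S t) \<le> ennreal \<delta> + ennreal \<delta>" .
      show "0 \<le> ennreal (lam k)" by simp
      have Fm: "F \<in> borel_measurable borel" by (rule borel_measurable_continuous_onI[OF Fc])
      define A1 where "A1 = {0..T} \<inter> F -` B1"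
      have A1s: "A1 \<in> sets lborel"
        using measurable_sets[OF Fm, of B1] unfolding A1_def B1_def by auto
      have Gk: "service_dist (\<Gamma> k)" using Gam k by auto
      then interpret G: prob_space "\<Gamma> k" by (simp add: service_dist_def)
      have Gs: "sets (\<Gamma> k) = sets borel" using Gk by (simp add: service_dist_def)
      have GM: "\<Gamma> k \<in> \<M>" using k unfolding \<M>_def by auto
      have pw: "indicator {0..t} s * dplus_prod (w s) (\<Gamma> k) (shiftt S (t - s))
          \<le> indicator A1 s + ennreal \<delta> * indicator {0..T} s" for s
      proof (cases "s \<in> {0..t}")
        case False then show ?thesis by simp
      next
        case True
        then have sT: "s \<in> {0..T}" using t0 by auto
        have Fs: "F s = w s + s" using hid[OF sT] by (simp add: F_def)
        have "dplus_prod (w s) (\<Gamma> k) (shiftt S (t - s)) \<le> indicator A1 s + ennreal \<delta>"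
        proof (cases "w s > 0")
          case False then show ?thesis by (simp add: dplus_prod_def)
        next
          case wpos: True
          define Y where "Y = {y. (w s, y) \<in> shiftt S (t - s)}"
          have dp: "dplus_prod (w s) (\<Gamma> k) (shiftt S (t - s)) = emeasure (\<Gamma> k) Y"
            using wpos by (simp add: dplus_prod_def Y_def)
          show ?thesis
          proof (cases "s \<in> A1")
            case True
            have "emeasure (\<Gamma> k) Y \<le> emeasure (\<Gamma> k) (space (\<Gamma> k))" by (rule emeasure_space)
            also have "\<dots> = 1" by (rule G.emeasure_space_1)
            finally show ?thesis using True dp by (simp add: add_increasing2)
          next
            case False
            then have nF: "\<not> dist (fst p + t) (F s) < \<kappa>" using sT unfolding A1_def B1_def by auto
            have "Y \<subseteq> ball (snd p + (t - s)) \<kappa>"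
            proof
              fix y assume "y \<in> Y"
              then have "(w s - (t - s), y - (t - s)) \<in> S"
                by (auto simp: Y_def shiftt_def shift_def)
              then have "dist (fst p) (w s - (t - s)) < \<kappa> \<or> dist (snd p) (y - (t - s)) < \<kappa>"
                by (auto simp: S_def)
              moreover have "\<not> dist (fst p) (w s - (t - s)) < \<kappa>" using nF Fs by (simp add: dist_real_def)
              ultimately show "y \<in> ball (snd p + (t - s)) \<kappa>" by (auto simp: dist_real_def)
            qed
            then have "emeasure (\<Gamma> k) Y \<le> emeasure (\<Gamma> k) (ball (snd p + (t - s)) \<kappa>)"
              using Gs by (intro emeasure_mono) auto
            also have "\<dots> < ennreal \<delta>" using \<kappa>(2) GM by auto
            finally show ?thesis using dp by (simp add: add_increasing)
          qed
        qed
        then show ?thesis using True sT by simp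
      qed
      have "(\<integral>\<^sup>+ s. indicator {0..t} s * dplus_prod (w s) (\<Gamma> k) (shiftt S (t - s)) \<partial>lborel)
          \<le> (\<integral>\<^sup>+ s. indicator A1 s + ennreal \<delta> * indicator {0..T} s \<partial>lborel)"
        by (intro nn_integral_mono pw)
      also have "\<dots> = emeasure lborel A1 + ennreal \<delta> * emeasure lborel {0..T}"
        using A1s by (subst nn_integral_add) (auto simp: nn_integral_cmult_indicator)
      also have "\<dots> \<le> ennreal \<delta> + ennreal \<delta> * ennreal T"
      proof (intro add_mono)
        have "emeasure lborel A1 = emeasure \<nu>f B1" using pf(4)[of B1] by (simp add: A1_def B1_def)
        also have "\<dots> < ennreal \<delta>" using \<kappa>(2) unfolding \<M>_def B1_def by auto
        finally show "emeasure lborel A1 \<le> ennreal \<delta>" by simp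
        show "ennreal \<delta> * emeasure lborel {0..T} \<le> ennreal \<delta> * ennreal T" using T0 by simp
      qed
      finally show "(\<integral>\<^sup>+ s. indicator {0..t} s * dplus_prod (w s) (\<Gamma> k) (shiftt S (t - s)) \<partial>lborel)
          \<le> ennreal \<delta> + ennreal \<delta> * ennreal T" .
    qed
    also have "\<dots> = ennreal (2 * \<delta> + lam k * (\<delta> + \<delta> * T))"
    proof -
      have l0: "lam k \<ge> 0" using lam_pos k by (auto intro: less_imp_le)
      have e1: "ennreal (\<delta> * T) = ennreal \<delta> * ennreal T" using \<delta>0 T0 by (intro ennreal_mult) auto
      have e2: "ennreal (\<delta> + \<delta> * T) = ennreal \<delta> + ennreal \<delta> * ennreal T"
        using \<delta>0 T0 e1 by (subst ennreal_plus) auto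
      have e3: "ennreal (lam k * (\<delta> + \<delta> * T)) = ennreal (lam k) * (ennreal \<delta> + ennreal \<delta> * ennreal T)"
        using \<delta>0 T0 l0 e2 by (subst ennreal_mult) auto
      have e4: "ennreal (2 * \<delta>) = ennreal \<delta> + ennreal \<delta>"
        using \<delta>0 by (subst ennreal_plus[symmetric]) auto
      have "ennreal (2 * \<delta> + lam k * (\<delta> + \<delta> * T)) = ennreal (2 * \<delta>) + ennreal (lam k * (\<delta> + \<delta> * T))"
        using \<delta>0 T0 l0 by (intro ennreal_plus) auto
      then show ?thesis using e3 e4 by simp
    qed
    also have "\<dots> \<le> ennreal Bnd"
    proof (rule ennreal_leI)
      have "lam k * (\<delta> + \<delta> * T) \<le> \<Lambda> * (\<delta> + \<delta> * T)"
        using lamle[OF k] \<delta>0 T0 by (intro mult_right_mono) auto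
      then show "2 * \<delta> + lam k * (\<delta> + \<delta> * T) \<le> Bnd" by (simp add: Bnd_def)
    qed
    finally show ?thesis .
  qed
  have "Max ((\<lambda>k. SUP t\<in>{0..T}. SUP p\<in>Rp2.
            emeasure (\<zeta> t k) (enlarge (shift Cset p) \<kappa>)) ` {1..K}) \<le> ennreal Bnd"
    using K by (subst Max_le_iff) (auto intro!: SUP_least main)
  also have "\<dots> < ennreal \<epsilon>" using Bnd eps by (intro ennreal_lessI)
  finally show ?thesis using \<kappa>(1) by blast
qed

end
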